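(* Let $G$ be a finite two-player zero-sum game with finite pure strategy sets $S_1,S_2$ and payoffs $v_1=-v_2$, extended bilinearly to mixed strategies. Run Anytime Double Oracle (ADO) from nonempty initial populations $\Pi^0_1\subseteq S_1$, $\Pi^0_2\subseteq S_2$: at each iteration $t$, for each $i\in\{1,2\}$ let $\pi^r_i$ be player $i$'s Nash equilibrium strategy in the restricted game $G^i$, in which player $i$ may only play mixed strategies supported on $\Pi^t_i$ while player $-i$ may play any mixed strategy in $\Delta(S_{-i})$ (i.e. $\pi^r_i\in\arg\max_{\sigma_i\in\Delta(\Pi^t_i)}\min_{\sigma_{-i}\in\Delta(S_{-i})}v_i(\sigma_i,\sigma_{-i})$); then for each $i$ add to $\Pi^t_i$ a pure best response of player $i$ to $\pi^r_{-i}$, chosen outside $\Pi^t_i$ whenever possible. ADO terminates at an iteration $t$ at which, for neither player $i\in\{1,2\}$, there exists a pure best response to $\pi^r_{-i}$ that is not in $\Pi^t_i$. Then, when ADO terminates, the profile $(\pi^r_1,\pi^r_2)$ is a Nash equilibrium of the full game $G$.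
   Context: $\Delta(X)$ denotes the set of mixed strategies supported on the set $X$ of pure strategies. A best response of player $i$ to $\pi_{-i}$ is a strategy maximizing $v_i(\cdot,\pi_{-i})$ over all strategies of player $i$ in the full game. A Nash equilibrium of $G$ is a profile $(\pi_1,\pi_2)$ such that for each $i$, $v_i(\pi_i,\pi_{-i})=\max_{\pi_i'}v_i(\pi_i',\pi_{-i})$. *)

theory Defs
  imports Complex_Main
begin

definition mixed :: "'a set \<Rightarrow> ('a \<Rightarrow> real) \<Rightarrow> bool" where
  "mixed X \<sigma> \<longleftrightarrow> (\<forall>x. 0 \<le> \<sigma> x) \<and> (\<forall>x. x \<notin> X \<longrightarrow> \<sigma> x = 0) \<and> sum \<sigma> X = 1"

definition pure :: "'a \<Rightarrow> ('a \<Rightarrow> real)" where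
  "pure s = (\<lambda>x. if x = s then 1 else 0)"

definition v1 :: "'a set \<Rightarrow> 'b set \<Rightarrow> ('a \<Rightarrow> 'b \<Rightarrow> real) \<Rightarrow> ('a \<Rightarrow> real) \<Rightarrow> ('b \<Rightarrow> real) \<Rightarrow> real" where
  "v1 S1 S2 u \<sigma>1 \<sigma>2 = (\<Sum>x\<in>S1. \<Sum>y\<in>S2. \<sigma>1 x * \<sigma>2 y * u x y)"

definition v2 :: "'a set \<Rightarrow> 'b set \<Rightarrow> ('a \<Rightarrow> 'b \<Rightarrow> real) \<Rightarrow> ('b \<Rightarrow> real) \<Rightarrow> ('a \<Rightarrow> real) \<Rightarrow> real" where
  "v2 S1 S2 u \<sigma>2 \<sigma>1 = - v1 S1 S2 u \<sigma>1 \<sigma>2"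

text \<open>Nash-equilibrium strategy of the restricted player in the restricted game G^i:
  pi in argmax over Delta(P) of min over Delta(T) of v(sigma, tau), where v is the player's payoff
  (own strategy first), P the player's population, T the opponent's full pure strategy set.\<close>
definition restricted_eq_strategy ::
  "('c \<Rightarrow> real) \<Rightarrow> 'c set \<Rightarrow> 'd set \<Rightarrow> (('c \<Rightarrow> real) \<Rightarrow> ('d \<Rightarrow> real) \<Rightarrow> real) \<Rightarrow> bool" where
  "restricted_eq_strategy \<pi> P T v \<longleftrightarrow> mixed P \<pi> \<and>
     (\<forall>\<sigma>. mixed P \<sigma> \<longrightarrow>
        (INF \<tau>\<in>{\<tau>. mixed T \<tau>}. v \<sigma> \<tau>) \<le> (INF \<tau>\<in>{\<tau>. mixed T \<tau>}. v \<pi> \<tau>))"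

definition pure_best_response ::
  "'c \<Rightarrow> 'c set \<Rightarrow> (('c \<Rightarrow> real) \<Rightarrow> ('d \<Rightarrow> real) \<Rightarrow> real) \<Rightarrow> ('d \<Rightarrow> real) \<Rightarrow> bool" where
  "pure_best_response s S v \<tau> \<longleftrightarrow> s \<in> S \<and> (\<forall>\<sigma>. mixed S \<sigma> \<longrightarrow> v \<sigma> \<tau> \<le> v (pure s) \<tau>)"

definition nash_eq ::
  "'a set \<Rightarrow> 'b set \<Rightarrow> ('a \<Rightarrow> 'b \<Rightarrow> real) \<Rightarrow> ('a \<Rightarrow> real) \<Rightarrow> ('b \<Rightarrow> real) \<Rightarrow> bool" where
  "nash_eq S1 S2 u \<pi>1 \<pi>2 \<longleftrightarrow> mixed S1 \<pi>1 \<and> mixed S2 \<pi>2 \<and>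
     (\<forall>\<sigma>1. mixed S1 \<sigma>1 \<longrightarrow> v1 S1 S2 u \<sigma>1 \<pi>2 \<le> v1 S1 S2 u \<pi>1 \<pi>2) \<and>
     (\<forall>\<sigma>2. mixed S2 \<sigma>2 \<longrightarrow> v2 S1 S2 u \<sigma>2 \<pi>1 \<le> v2 S1 S2 u \<pi>2 \<pi>1)"

end

theory Submission
  imports Defs "HOL-Analysis.Analysis"
begin

definition col :: "'c set \<Rightarrow> ('c \<Rightarrow> 'd \<Rightarrow> real) \<Rightarrow> ('c \<Rightarrow> real) \<Rightarrow> 'd \<Rightarrow> real" where
  "col I w x j = (\<Sum>i\<in>I. x i * w i j)"

definition tr :: "('c \<Rightarrow> 'd \<Rightarrow> real) \<Rightarrow> 'd \<Rightarrow> 'c \<Rightarrow> real" where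
  "tr w = (\<lambda>j i. - w i j)"

lemma tr_tr [simp]: "tr (tr w) = w"
  by (simp add: tr_def)

definition saddle :: "'c set \<Rightarrow> 'd set \<Rightarrow> ('c \<Rightarrow> 'd \<Rightarrow> real) \<Rightarrow> bool" where
  "saddle I J w \<longleftrightarrow> (\<exists>x y. mixed I x \<and> mixed J y \<and>
      (\<forall>i\<in>I. \<forall>j\<in>J. - col J (tr w) y i \<le> col I w x j))"

lemma saddle_tr: "saddle I J w \<Longrightarrow> saddle J I (tr w)"
  unfolding saddle_def by auto (metis neg_le_iff_le minus_minus)

lemma mixed_pure: "finite I \<Longrightarrow> i \<in> I \<Longrightarrow> mixed I (pure i)"
  unfolding mixed_def pure_def by auto

lemma sum_pure: "finite I \<Longrightarrow> i \<in> I \<Longrightarrow> (\<Sum>j\<in>I. pure i j * c j) = c i"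
proof -
  assume a: "finite I" "i \<in> I"
  have "(\<Sum>j\<in>I. pure i j * c j) = (\<Sum>j\<in>I. if i = j then c j else 0)"
    by (intro sum.cong) (auto simp: pure_def)
  then show ?thesis using a by simp
qed

lemma mixed_mix:
  assumes "mixed I x" "mixed I y" "0 \<le> e" "e \<le> 1"
  shows "mixed I (\<lambda>i. (1-e) * x i + e * y i)"
  using assms unfolding mixed_def
  by (auto simp: sum.distrib sum_distrib_left[symmetric])

lemma col_mix: "col I w (\<lambda>i. (1-e) * x i + e * y i) j = (1-e) * col I w x j + e * col I w y j"
proof -
  have "(1-e) * col I w x j + e * col I w y j = (\<Sum>i\<in>I. (1-e) * (x i * w i j) + e * (y i * w i j))"
    unfolding col_def by (simp add: sum.distrib sum_distrib_left)
  also have "\<dots> = col I w (\<lambda>i. (1-e) * x i + e * y i) j"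
    unfolding col_def by (intro sum.cong) (auto simp: algebra_simps)
  finally show ?thesis by simp
qed

lemma mixed_le_one: "mixed I x \<Longrightarrow> finite I \<Longrightarrow> x i \<le> 1"
  unfolding mixed_def
  by (metis member_le_sum zero_less_one_class.zero_le_one)

lemma mixed_sum_ge:
  assumes "mixed I x" "\<And>i. i \<in> I \<Longrightarrow> m \<le> c i"
  shows "m \<le> (\<Sum>i\<in>I. x i * c i)"
proof -
  have "(\<Sum>i\<in>I. x i * m) \<le> (\<Sum>i\<in>I. x i * c i)"
    using assms by (intro sum_mono mult_left_mono) (auto simp: mixed_def)
  moreover have "(\<Sum>i\<in>I. x i * m) = m" using assms(1)
    by (simp add: mixed_def sum_distrib_right[symmetric])
  ultimately show ?thesis by simp
qed

lemma mixed_sum_le: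
  assumes "mixed I x" "\<And>i. i \<in> I \<Longrightarrow> c i \<le> m"
  shows "(\<Sum>i\<in>I. x i * c i) \<le> m"
proof -
  have "(\<Sum>i\<in>I. x i * c i) \<le> (\<Sum>i\<in>I. x i * m)"
    using assms by (intro sum_mono mult_left_mono) (auto simp: mixed_def)
  moreover have "(\<Sum>i\<in>I. x i * m) = m" using assms(1)
    by (simp add: mixed_def sum_distrib_right[symmetric])
  ultimately show ?thesis by simp
qed

lemma mixed_mono:
  assumes "mixed J' y" "J' \<subseteq> J" "finite J"
  shows "mixed J y"
proof -
  have "sum y J = sum y J'"
    using assms by (intro sum.mono_neutral_right) (auto simp: mixed_def)
  then show ?thesis using assms by (auto simp: mixed_def)
qed

lemma col_subset:
  assumes "mixed J' y" "J' \<subseteq> J" "finite J"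
  shows "col J w y i = col J' w y i"
  unfolding col_def
  using assms by (intro sum.mono_neutral_right) (auto simp: mixed_def)

lemma ev01: "eventually (\<lambda>e::real. 0 < e \<and> e < 1) (at_right 0)"
  using eventually_at_right_real[of 0 1] by (rule eventually_mono) auto

lemma perturb:
  fixes c0 c1 :: "'d \<Rightarrow> real"
  assumes "finite J" "\<And>j. j \<in> J \<Longrightarrow> v < c0 j \<or> (v \<le> c0 j \<and> v < c1 j)"
  shows "\<exists>e. 0 < e \<and> e < 1 \<and> (\<forall>j\<in>J. v < (1-e) * c0 j + e * c1 j)"
proof -
  have ev: "eventually (\<lambda>e. v < (1-e) * c0 j + e * c1 j) (at_right 0)" if "j \<in> J" for j
  proof (cases "v < c0 j")
    case True
    have "((\<lambda>e::real. (1-e) * c0 j + e * c1 j) \<longlongrightarrow> (1-0) * c0 j + 0 * c1 j) (at_right 0)"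
      by (intro tendsto_intros)
    then show ?thesis using True by (intro order_tendstoD) auto
  next
    case False
    then have h: "v \<le> c0 j" "v < c1 j" using assms(2)[OF that] by auto
    have "eventually (\<lambda>e::real. 0 < e \<and> e < 1) (at_right 0)"
      by (rule ev01)
    then show ?thesis
    proof (rule eventually_mono)
      fix e :: real assume e: "0 < e \<and> e < 1"
      have "(1-e) * v \<le> (1-e) * c0 j" using e h by (intro mult_left_mono) auto
      moreover have "e * v < e * c1 j" using e h by simp
      ultimately show "v < (1-e) * c0 j + e * c1 j" by (simp add: algebra_simps)
    qed
  qed
  have "eventually (\<lambda>e::real. 0 < e \<and> e < 1) (at_right 0)"
    by (rule ev01)
  moreover have "eventually (\<lambda>e. \<forall>j\<in>J. v < (1-e) * c0 j + e * c1 j) (at_right 0)"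
    using assms(1) ev by (simp add: eventually_ball_finite)
  ultimately have "eventually (\<lambda>e. (0 < e \<and> e < 1) \<and> (\<forall>j\<in>J. v < (1-e) * c0 j + e * c1 j)) (at_right (0::real))"
    by (rule eventually_conj)
  then show ?thesis
    by (metis (no_types, lifting) eventually_happens' trivial_limit_at_right_real)
qed

lemma compact_mixed:
  assumes "finite I"
  shows "compact {x :: 'c \<Rightarrow> real. mixed I x}"
proof -
  define S where "S = (\<lambda>i. if i \<in> I then {0..1::real} else {0})"
  have "compactin (product_topology (\<lambda>i. euclidean) UNIV) (PiE UNIV S)"
    by (subst compactin_PiE) (auto simp: S_def)
  then have c: "compact (PiE UNIV S)"
    by (simp add: euclidean_product_topology)
  have cl: "closed {x :: 'c \<Rightarrow> real. sum x I = 1}"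
    by (intro closed_Collect_eq continuous_intros continuous_on_sum continuous_on_product_coordinates)
  have "{x :: 'c \<Rightarrow> real. mixed I x} = PiE UNIV S \<inter> {x. sum x I = 1}"
  proof (intro set_eqI iffI)
    fix x :: "'c \<Rightarrow> real" assume "x \<in> {x. mixed I x}"
    then show "x \<in> PiE UNIV S \<inter> {x. sum x I = 1}"
      using assms by (auto simp: S_def mixed_def PiE_def extensional_def Pi_iff mixed_le_one)
  next
    fix x :: "'c \<Rightarrow> real" assume "x \<in> PiE UNIV S \<inter> {x. sum x I = 1}"
    then have "\<forall>i. x i \<in> S i" "sum x I = 1" by (auto simp: PiE_def Pi_iff)
    then show "x \<in> {x. mixed I x}"
      unfolding mixed_def S_def by (auto split: if_splits)
  qed
  then show ?thesis using c cl by auto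
qed


lemma continuous_on_Min:
  fixes g :: "'d \<Rightarrow> 'x::topological_space \<Rightarrow> real"
  assumes "finite J" "J \<noteq> {}" "\<And>j. j \<in> J \<Longrightarrow> continuous_on K (g j)"
  shows "continuous_on K (\<lambda>x. Min ((\<lambda>j. g j x) ` J))"
  using assms
proof (induction J rule: finite_ne_induct)
  case (singleton j)
  then show ?case by simp
next
  case (insert j J)
  have "(\<lambda>x. Min ((\<lambda>j. g j x) ` insert j J)) = (\<lambda>x. min (g j x) (Min ((\<lambda>j. g j x) ` J)))"
    using insert by (auto simp: Min_insert)
  then show ?case using insert by (auto intro!: continuous_on_min)
qed

lemma attain:
  fixes c :: "'c \<Rightarrow> 'd \<Rightarrow> real"
  assumes "finite I" "I \<noteq> {}" "finite J" "J \<noteq> {}"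
  shows "\<exists>x. mixed I x \<and> (\<forall>x'. mixed I x' \<longrightarrow> Min (col I c x' ` J) \<le> Min (col I c x ` J))"
proof -
  have cont: "continuous_on {x. mixed I x} (\<lambda>x. Min ((\<lambda>j. col I c x j) ` J))"
    using assms unfolding col_def
    by (intro continuous_on_Min continuous_intros continuous_on_sum continuous_on_mult
          continuous_on_product_coordinates[THEN continuous_on_subset]) auto
  obtain i where "i \<in> I" using assms by auto
  then have ne: "{x. mixed I x} \<noteq> {}" using mixed_pure[OF assms(1)] by auto
  from continuous_attains_sup[OF compact_mixed[OF assms(1)] ne cont]
  show ?thesis by auto
qed

lemma loomis_step:
  fixes w :: "'c \<Rightarrow> 'd \<Rightarrow> real"
  assumes fin: "finite I" "finite J" "I \<noteq> {}" "J \<noteq> {}"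
    and IH: "\<And>J'. J' \<subset> J \<Longrightarrow> J' \<noteq> {} \<Longrightarrow> saddle I J' w"
    and x0: "mixed I x0" "\<And>x. mixed I x \<Longrightarrow> Min (col I w x ` J) \<le> Min (col I w x0 ` J)"
    and y0: "\<And>y. mixed J y \<Longrightarrow> Min (col J (tr w) y ` I) \<le> Min (col J (tr w) y0 ` I)"
    and k: "k \<in> J" "Min (col I w x0 ` J) < col I w x0 k"
  shows "- Min (col J (tr w) y0 ` I) \<le> Min (col I w x0 ` J)"
proof -
  define v where "v = Min (col I w x0 ` J)"
  define J' where "J' = J - {k}"
  have "J' \<noteq> {}"
  proof
    assume "J' = {}"
    then have "J = {k}" using k unfolding J'_def by auto
    then show False using k by simp
  qed
  moreover have "J' \<subset> J" using k unfolding J'_def by auto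
  ultimately have "saddle I J' w" by (intro IH)
  then obtain x' y' where x': "mixed I x'" and y': "mixed J' y'"
    and sd0: "\<forall>i\<in>I. \<forall>j\<in>J'. - col J' (tr w) y' i \<le> col I w x' j"
    unfolding saddle_def by blast
  have sd: "\<And>i j. i \<in> I \<Longrightarrow> j \<in> J' \<Longrightarrow> - col J' (tr w) y' i \<le> col I w x' j"
    using sd0 by blast
  have fJ': "finite J'" "J' \<subseteq> J" using fin unfolding J'_def by auto
  define w0 where "w0 = Min (col I w x' ` J')"
  have w0le: "w0 \<le> col I w x' j" if "j \<in> J'" for j
    unfolding w0_def using that fJ' by (intro Min_le) auto
  have "w0 \<in> col I w x' ` J'" unfolding w0_def using fJ' \<open>J' \<noteq> {}\<close> by (intro Min_in) auto
  then obtain j0 where j0: "j0 \<in> J'" "col I w x' j0 = w0" by (metis imageE)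
  have yJ: "mixed J y'" using mixed_mono[OF y' fJ'(2) fin(2)] .
  have "- w0 \<le> col J (tr w) y' i" if "i \<in> I" for i
  proof -
    have "- col J' (tr w) y' i \<le> w0" using sd[OF that j0(1)] j0(2) by simp
    moreover have "col J (tr w) y' i = col J' (tr w) y' i" by (rule col_subset[OF y' fJ'(2) fin(2)])
    ultimately show ?thesis by linarith
  qed
  then have "- w0 \<le> Min (col J (tr w) y' ` I)" using fin by (simp add: Min_ge_iff)
  also have "\<dots> \<le> Min (col J (tr w) y0 ` I)" using y0[OF yJ] .
  finally have A: "- Min (col J (tr w) y0 ` I) \<le> w0" by simp
  show ?thesis
  proof (cases "w0 \<le> v")
    case True
    then show ?thesis using A unfolding v_def by simp
  next
    case False
    have "\<exists>e. 0 < e \<and> e < 1 \<and> (\<forall>j\<in>J. v < (1-e) * col I w x0 j + e * col I w x' j)"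
    proof (rule perturb[OF fin(2)])
      fix j assume j: "j \<in> J"
      show "v < col I w x0 j \<or> (v \<le> col I w x0 j \<and> v < col I w x' j)"
      proof (cases "j = k")
        case True then show ?thesis using k unfolding v_def by simp
      next
        case False
        then have "j \<in> J'" using j unfolding J'_def by auto
        have "v \<le> col I w x0 j" unfolding v_def using j fin by (intro Min_le) auto
        then show ?thesis using w0le[OF \<open>j \<in> J'\<close>] \<open>\<not> w0 \<le> v\<close> by linarith
      qed
    qed
    then obtain e where e: "0 < e" "e < 1" "\<forall>j\<in>J. v < (1-e) * col I w x0 j + e * col I w x' j"
      by blast
    define xe where "xe = (\<lambda>i. (1-e) * x0 i + e * x' i)"
    have "mixed I xe" unfolding xe_def using mixed_mix[OF x0(1) x'] e by auto
    then have le: "Min (col I w xe ` J) \<le> v" using x0(2) unfolding v_def by blast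
    have "v < Min (col I w xe ` J)"
      using e(3) fin unfolding xe_def col_mix by (simp add: Min_gr_iff)
    with le show ?thesis by simp
  qed
qed


lemma saddle_exists:
  fixes w :: "'c \<Rightarrow> 'd \<Rightarrow> real"
  shows "finite I \<Longrightarrow> finite J \<Longrightarrow> I \<noteq> {} \<Longrightarrow> J \<noteq> {} \<Longrightarrow> saddle I J w"
proof (induction "card I + card J" arbitrary: I J rule: less_induct)
  case less
  note fin = less.prems
  obtain x0 where x0: "mixed I x0" "\<And>x. mixed I x \<Longrightarrow> Min (col I w x ` J) \<le> Min (col I w x0 ` J)"
    using attain[OF fin(1) fin(3) fin(2) fin(4), where c=w] by blast
  obtain y0 where y0: "mixed J y0" "\<And>y. mixed J y \<Longrightarrow> Min (col J (tr w) y ` I) \<le> Min (col J (tr w) y0 ` I)"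
    using attain[OF fin(2) fin(4) fin(1) fin(3), where c="tr w"] by blast
  define v1 where "v1 = Min (col I w x0 ` J)"
  define v2 where "v2 = Min (col J (tr w) y0 ` I)"
  have ge1: "v1 \<le> col I w x0 j" if "j \<in> J" for j
    unfolding v1_def using that fin by (intro Min_le) auto
  have ge2: "v2 \<le> col J (tr w) y0 i" if "i \<in> I" for i
    unfolding v2_def using that fin by (intro Min_le) auto
  have IH1: "saddle I J' w" if "J' \<subset> J" "J' \<noteq> {}" for J'
  proof -
    have "card J' < card J" using that fin by (intro psubset_card_mono) auto
    moreover have "finite J'" using that fin by (meson finite_subset less_imp_le)
    ultimately show ?thesis using less.hyps[of I J'] fin that by auto
  qed
  have IH2: "saddle J I' (tr w)" if "I' \<subset> I" "I' \<noteq> {}" for I'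
  proof -
    have "card I' < card I" using that fin by (intro psubset_card_mono) auto
    moreover have "finite I'" using that fin by (meson finite_subset less_imp_le)
    ultimately have "saddle I' J w" using less.hyps[of I' J] fin that by auto
    then show ?thesis by (rule saddle_tr)
  qed
  have key: "- v2 \<le> v1"
  proof (cases "\<exists>k\<in>J. v1 < col I w x0 k")
    case True
    then obtain k where "k \<in> J" "v1 < col I w x0 k" by blast
    then show ?thesis unfolding v1_def v2_def
      by (intro loomis_step[OF fin IH1 x0 y0(2)]) (auto simp: v1_def)
  next
    case F1: False
    show ?thesis
    proof (cases "\<exists>k\<in>I. v2 < col J (tr w) y0 k")
      case True
      then obtain k where k: "k \<in> I" "v2 < col J (tr w) y0 k" by blast
      have "- Min (col I (tr (tr w)) x0 ` J) \<le> Min (col J (tr w) y0 ` I)"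
        using x0(2) k unfolding v2_def
        by (intro loomis_step[OF fin(2) fin(1) fin(4) fin(3) IH2 y0]) auto
      then show ?thesis unfolding v1_def v2_def by simp
    next
      case False
      have e1: "col I w x0 j = v1" if "j \<in> J" for j using F1 ge1[OF that] that by force
      have e2: "col J (tr w) y0 i = v2" if "i \<in> I" for i using False ge2[OF that] that by force
      define S where "S = (\<Sum>i\<in>I. \<Sum>j\<in>J. x0 i * y0 j * w i j)"
      have "S = (\<Sum>j\<in>J. y0 j * col I w x0 j)"
        unfolding S_def col_def by (subst sum.swap) (simp add: sum_distrib_left algebra_simps)
      also have "\<dots> = (\<Sum>j\<in>J. y0 j * v1)" using e1 by simp
      also have "\<dots> = v1" using y0(1) by (simp add: mixed_def sum_distrib_right[symmetric])
      finally have s1: "S = v1" .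
      have "S = - (\<Sum>i\<in>I. x0 i * col J (tr w) y0 i)"
        unfolding S_def col_def tr_def by (simp add: sum_distrib_left sum_negf algebra_simps)
      also have "\<dots> = - (\<Sum>i\<in>I. x0 i * v2)" using e2 by simp
      also have "\<dots> = - v2" using x0(1) by (simp add: mixed_def sum_distrib_right[symmetric])
      finally show ?thesis using s1 by simp
    qed
  qed
  show ?case unfolding saddle_def
  proof (intro exI conjI ballI)
    fix i j assume "i \<in> I" "j \<in> J"
    then show "- col J (tr w) y0 i \<le> col I w x0 j" using ge1 ge2 key by fastforce
  qed (use x0 y0 in auto)
qed


lemma v1_col: "v1 S1 S2 u \<sigma> \<tau> = (\<Sum>j\<in>S2. \<tau> j * col S1 u \<sigma> j)"
  unfolding v1_def col_def by (subst sum.swap) (simp add: sum_distrib_left algebra_simps)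

lemma v1_row: "v1 S1 S2 u \<sigma> \<tau> = - (\<Sum>i\<in>S1. \<sigma> i * col S2 (tr u) \<tau> i)"
  unfolding v1_def col_def tr_def by (simp add: sum_distrib_left sum_negf algebra_simps)

lemma v2_row: "v2 S1 S2 u \<tau> \<sigma> = (\<Sum>i\<in>S1. \<sigma> i * col S2 (tr u) \<tau> i)"
  unfolding v2_def v1_row by simp

lemma inf_mixed:
  assumes "finite X" "X \<noteq> {}"
  shows "(INF \<sigma>\<in>{\<sigma>. mixed X \<sigma>}. (\<Sum>i\<in>X. \<sigma> i * c i)) = Min (c ` X)"
proof (rule cInf_eq_minimum)
  have "Min (c ` X) \<in> c ` X" using assms by (intro Min_in) auto
  then obtain i where i: "i \<in> X" "Min (c ` X) = c i" by auto
  have "(\<Sum>j\<in>X. pure i j * c j) \<in> (\<lambda>\<sigma>. \<Sum>i\<in>X. \<sigma> i * c i) ` {\<sigma>. mixed X \<sigma>}"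
    using mixed_pure[OF assms(1) i(1)] by blast
  then show "Min (c ` X) \<in> (\<lambda>\<sigma>. \<Sum>i\<in>X. \<sigma> i * c i) ` {\<sigma>. mixed X \<sigma>}"
    using sum_pure[OF assms(1) i(1)] i(2) by simp
next
  fix y assume "y \<in> (\<lambda>\<sigma>. \<Sum>i\<in>X. \<sigma> i * c i) ` {\<sigma>. mixed X \<sigma>}"
  then obtain x where "mixed X x" "y = (\<Sum>i\<in>X. x i * c i)" by auto
  then show "Min (c ` X) \<le> y" using assms by (auto intro!: mixed_sum_ge)
qed

lemma local_opt:
  fixes w :: "'c \<Rightarrow> 'd \<Rightarrow> real"
  assumes fin: "finite S" "finite T" "T \<noteq> {}"
    and P: "mixed P \<pi>" "mixed P \<sigma>"
    and opt: "\<And>\<sigma>'. mixed P \<sigma>' \<Longrightarrow> Min (col S w \<sigma>' ` T) \<le> Min (col S w \<pi> ` T)"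
    and br: "\<And>t. t \<in> T \<Longrightarrow> col S w \<pi> t = Min (col S w \<pi> ` T) \<Longrightarrow> t \<in> Q"
  shows "\<exists>t\<in>T. t \<in> Q \<and> col S w \<sigma> t \<le> Min (col S w \<pi> ` T)"
proof (rule ccontr)
  define b where "b = Min (col S w \<pi> ` T)"
  assume "\<not> ?thesis"
  then have nq: "\<And>t. t \<in> T \<Longrightarrow> t \<in> Q \<Longrightarrow> b < col S w \<sigma> t" unfolding b_def by force
  have "\<exists>e. 0 < e \<and> e < 1 \<and> (\<forall>t\<in>T. b < (1-e) * col S w \<pi> t + e * col S w \<sigma> t)"
  proof (rule perturb[OF fin(2)])
    fix t assume t: "t \<in> T"
    have le: "b \<le> col S w \<pi> t" unfolding b_def using t fin by (intro Min_le) auto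
    show "b < col S w \<pi> t \<or> (b \<le> col S w \<pi> t \<and> b < col S w \<sigma> t)"
    proof (cases "b = col S w \<pi> t")
      case True
      then have "t \<in> Q" using br[OF t] unfolding b_def by simp
      then show ?thesis using nq[OF t] le by simp
    next
      case False then show ?thesis using le by simp
    qed
  qed
  then obtain e where e: "0 < e" "e < 1" "\<forall>t\<in>T. b < (1-e) * col S w \<pi> t + e * col S w \<sigma> t"
    by blast
  define xe where "xe = (\<lambda>i. (1-e) * \<pi> i + e * \<sigma> i)"
  have "mixed P xe" unfolding xe_def using mixed_mix[OF P] e by auto
  then have le: "Min (col S w xe ` T) \<le> b" using opt unfolding b_def by blast
  have "b < Min (col S w xe ` T)"
    using e(3) fin unfolding xe_def col_mix by (simp add: Min_gr_iff)
  with le show False by simp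
qed

theorem proposition2:
  fixes S1 :: "'a set" and S2 :: "'b set" and u :: "'a \<Rightarrow> 'b \<Rightarrow> real"
    and P1 :: "'a set" and P2 :: "'b set"
    and \<pi>1 :: "'a \<Rightarrow> real" and \<pi>2 :: "'b \<Rightarrow> real"
  assumes "finite S1" and "finite S2"
    and "P1 \<subseteq> S1" and "P2 \<subseteq> S2" and "P1 \<noteq> {}" and "P2 \<noteq> {}"
    and "restricted_eq_strategy \<pi>1 P1 S2 (v1 S1 S2 u)"
    and "restricted_eq_strategy \<pi>2 P2 S1 (v2 S1 S2 u)"
    and "\<not> (\<exists>s. pure_best_response s S1 (v1 S1 S2 u) \<pi>2 \<and> s \<notin> P1)"
    and "\<not> (\<exists>s. pure_best_response s S2 (v2 S1 S2 u) \<pi>1 \<and> s \<notin> P2)"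
  shows "nash_eq S1 S2 u \<pi>1 \<pi>2"
proof -
  note fS1 = assms(1) and fS2 = assms(2)
  have ne1: "S1 \<noteq> {}" using assms(3,5) by auto
  have ne2: "S2 \<noteq> {}" using assms(4,6) by auto
  have fP1: "finite P1" using assms(1,3) finite_subset by auto
  have fP2: "finite P2" using assms(2,4) finite_subset by auto
  have m1: "mixed P1 \<pi>1" and m2: "mixed P2 \<pi>2"
    using assms(7,8) unfolding restricted_eq_strategy_def by auto
  have M1: "mixed S1 \<pi>1" using mixed_mono[OF m1 assms(3) fS1] .
  have M2: "mixed S2 \<pi>2" using mixed_mono[OF m2 assms(4) fS2] .
  have inf1: "(INF \<tau>\<in>{\<tau>. mixed S2 \<tau>}. v1 S1 S2 u \<sigma> \<tau>) = Min (col S1 u \<sigma> ` S2)" for \<sigma>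
    unfolding v1_col using inf_mixed[OF fS2 ne2] by simp
  have inf2: "(INF \<sigma>\<in>{\<sigma>. mixed S1 \<sigma>}. v2 S1 S2 u \<tau> \<sigma>) = Min (col S2 (tr u) \<tau> ` S1)" for \<tau>
    unfolding v2_row using inf_mixed[OF fS1 ne1] by simp
  define b where "b = Min (col S1 u \<pi>1 ` S2)"
  define b' where "b' = Min (col S2 (tr u) \<pi>2 ` S1)"
  have geb: "b \<le> col S1 u \<pi>1 t" if "t \<in> S2" for t
    unfolding b_def using that fS2 by (intro Min_le) auto
  have geb': "b' \<le> col S2 (tr u) \<pi>2 s" if "s \<in> S1" for s
    unfolding b'_def using that fS1 by (intro Min_le) auto
  obtain x y where x: "mixed P1 x" and y: "mixed P2 y"
    and sd: "\<forall>i\<in>P1. \<forall>j\<in>P2. - col P2 (tr u) y i \<le> col P1 u x j"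
    using saddle_exists[OF fP1 fP2 assms(5,6), of u] unfolding saddle_def by blast
  have "\<exists>t\<in>S2. t \<in> P2 \<and> col S1 u x t \<le> b"
    unfolding b_def
  proof (rule local_opt[OF fS1 fS2 ne2 m1 x])
    fix \<sigma>' assume "mixed P1 \<sigma>'"
    then show "Min (col S1 u \<sigma>' ` S2) \<le> Min (col S1 u \<pi>1 ` S2)"
      using assms(7) unfolding restricted_eq_strategy_def inf1 by blast
  next
    fix t assume t: "t \<in> S2" "col S1 u \<pi>1 t = Min (col S1 u \<pi>1 ` S2)"
    have "pure_best_response t S2 (v2 S1 S2 u) \<pi>1"
      unfolding pure_best_response_def
    proof (intro conjI allI impI)
      fix \<sigma> assume "mixed S2 \<sigma>"
      then have "col S1 u \<pi>1 t \<le> (\<Sum>j\<in>S2. \<sigma> j * col S1 u \<pi>1 j)"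
        using t geb unfolding b_def by (intro mixed_sum_ge) auto
      moreover have "v2 S1 S2 u (pure t) \<pi>1 = - col S1 u \<pi>1 t"
        unfolding v2_def v1_col using sum_pure[OF fS2 t(1)] by simp
      ultimately show "v2 S1 S2 u \<sigma> \<pi>1 \<le> v2 S1 S2 u (pure t) \<pi>1"
        unfolding v2_def v1_col by simp
    qed (use t in auto)
    then show "t \<in> P2" using assms(10) by blast
  qed
  then obtain t where t: "t \<in> S2" "t \<in> P2" "col S1 u x t \<le> b" by blast
  have "\<exists>s\<in>S1. s \<in> P1 \<and> col S2 (tr u) y s \<le> b'"
    unfolding b'_def
  proof (rule local_opt[OF fS2 fS1 ne1 m2 y])
    fix \<sigma>' assume "mixed P2 \<sigma>'"
    then show "Min (col S2 (tr u) \<sigma>' ` S1) \<le> Min (col S2 (tr u) \<pi>2 ` S1)"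
      using assms(8) unfolding restricted_eq_strategy_def inf2 by blast
  next
    fix s assume s: "s \<in> S1" "col S2 (tr u) \<pi>2 s = Min (col S2 (tr u) \<pi>2 ` S1)"
    have "pure_best_response s S1 (v1 S1 S2 u) \<pi>2"
      unfolding pure_best_response_def
    proof (intro conjI allI impI)
      fix \<sigma> assume "mixed S1 \<sigma>"
      then have "col S2 (tr u) \<pi>2 s \<le> (\<Sum>i\<in>S1. \<sigma> i * col S2 (tr u) \<pi>2 i)"
        using s geb' unfolding b'_def by (intro mixed_sum_ge) auto
      moreover have "v1 S1 S2 u (pure s) \<pi>2 = - col S2 (tr u) \<pi>2 s"
        unfolding v1_row using sum_pure[OF fS1 s(1)] by simp
      ultimately show "v1 S1 S2 u \<sigma> \<pi>2 \<le> v1 S1 S2 u (pure s) \<pi>2"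
        unfolding v1_row by simp
    qed (use s in auto)
    then show "s \<in> P1" using assms(9) by blast
  qed
  then obtain s where s: "s \<in> S1" "s \<in> P1" "col S2 (tr u) y s \<le> b'" by blast
  have "- col P2 (tr u) y s \<le> col P1 u x t" using sd s(2) t(2) by blast
  moreover have "col P2 (tr u) y s = col S2 (tr u) y s" using col_subset[OF y assms(4) fS2, of "tr u" s] by simp
  moreover have "col P1 u x t = col S1 u x t" using col_subset[OF x assms(3) fS1, of u t] by simp
  ultimately have key: "- b' \<le> b" using s(3) t(3) by linarith
  have A1: "v1 S1 S2 u \<sigma>1 \<pi>2 \<le> - b'" if "mixed S1 \<sigma>1" for \<sigma>1
  proof -
    have "b' \<le> (\<Sum>i\<in>S1. \<sigma>1 i * col S2 (tr u) \<pi>2 i)" using that geb' by (intro mixed_sum_ge)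
    then show ?thesis unfolding v1_row by simp
  qed
  have A2: "b \<le> v1 S1 S2 u \<pi>1 \<tau>" if "mixed S2 \<tau>" for \<tau>
    unfolding v1_col using that geb by (intro mixed_sum_ge)
  show ?thesis unfolding nash_eq_def
  proof (intro conjI allI impI)
    fix \<sigma>1 assume "mixed S1 \<sigma>1"
    then show "v1 S1 S2 u \<sigma>1 \<pi>2 \<le> v1 S1 S2 u \<pi>1 \<pi>2" using A1 A2[OF M2] key by fastforce
  next
    fix \<sigma>2 assume "mixed S2 \<sigma>2"
    then show "v2 S1 S2 u \<sigma>2 \<pi>1 \<le> v2 S1 S2 u \<pi>2 \<pi>1"
      unfolding v2_def using A1[OF M1] A2 key by fastforce
  qed (use M1 M2 in auto)
qed

end
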